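(* Let $(a,b,c)$ be a Markov triple, let $m_1,m_2$ be positive integers with $a^2m_1+b^2m_2=c^2$, and let $l_2=(m_2+1)/a$ (a positive integer). Put $\mathbf{u}_1=(b^2,-m_1)$, $\mathbf{u}_2=-(a^2,m_2)$, $\mathbf{u}_3=(0,1)$ and $\mathbf{w}_1=-(a,l_2)$. Let $\Delta\subset\mathbb{R}^2$ be the triangle with vertices $V_0$, $V_1=V_0+a^2\mathbf{u}_1$, $V_2=V_1+b^2\mathbf{u}_2$ (so that $V_0=V_2+c^2\mathbf{u}_3$). Let $\ell$ be the line through $V_2$ in direction $\mathbf{w}_1$, let $Q$ be the point where $\ell$ meets the edge $[V_0,V_1]$, and let $M$ be the affine map of $\mathbb{R}^2$ fixing $\ell$ pointwise with linear part $v\mapsto v+\det(\mathbf{w}_1,v)\,\mathbf{w}_1$. Let $\Delta'=\mathrm{conv}(V_0,Q,V_2)\cup M(\mathrm{conv}(Q,V_1,V_2))$ be the base diagram obtained from $\Delta$ by transferring the cut (the cut being the segment of $\ell$ from the node to $V_2$) to its left. Then $\Delta'$ is a triangle whose three edges have affine lengths $\lambda c^2$, $\lambda b^2$, $\lambda a'^2$ for some $\lambda>0$, where $a'=3bc-a$.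
   Context: A Markov triple is a triple of positive integers $(a,b,c)$ with $a^2+b^2+c^2=3abc$. A vector $v\in\mathbb{Z}^2$ is primitive if it is not a positive integer multiple of another lattice vector; a vector $w=\lambda v$ with $v$ primitive and $\lambda\geq0$ has affine length $\lambda$, and the affine length of a segment with rational slope is the affine length of its displacement vector. The triangle $\Delta$ (with a nodal fiber on $\ell$ near each vertex and a cut from the node to the vertex) is the base diagram of an almost toric fibration of $\mathbb{CP}^2$ obtained from $\mathbb{CP}(a^2,b^2,c^2)$ by rational blowdowns at its three orbifold points; $M$ is the monodromy across the cut at $V_2$, and it sends $\mathbf{u}_2$ to $\mathbf{u}_3$. Transferring the cut produces another base diagram $\Delta'$ of the same almost toric fibration, with the cut now running from the node to $Q$. *)

theory Defs
  imports "HOL-Analysis.Analysis"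
begin

definition primitive :: "int \<times> int \<Rightarrow> bool" where
  "primitive v \<longleftrightarrow>
     \<not> (\<exists>(k::int) (u::int \<times> int). k > 0 \<and> u \<noteq> v \<and> v = (k * fst u, k * snd u))"

definition has_affine_length :: "real \<times> real \<Rightarrow> real \<Rightarrow> bool" where
  "has_affine_length w L \<longleftrightarrow>
     L \<ge> 0 \<and> (\<exists>v. primitive v \<and> w = (L * of_int (fst v), L * of_int (snd v)))"

definition det2 :: "real \<times> real \<Rightarrow> real \<times> real \<Rightarrow> real" where
  "det2 w v = fst w * snd v - snd w * fst v"

definition shear_map :: "real \<times> real \<Rightarrow> real \<times> real \<Rightarrow> real \<times> real \<Rightarrow> real \<times> real" where
  "shear_map P w x = P + ((x - P) + det2 w (x - P) *\<^sub>R w)"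

end

theory Submission
  imports Defs
begin


lemma markov_desc:
  fixes a b c :: int
  assumes "a \<ge> b" "b \<ge> c" "c \<ge> 2" "a > 0" "a^2 + b^2 + c^2 = 3*a*b*c"
  shows "0 < 3*b*c - a \<and> 3*b*c - a < a \<and> (3*b*c-a)^2 + b^2 + c^2 = 3*(3*b*c-a)*b*c"
proof -
  define e where "e = 3*b*c - a"
  have ae: "a * e = b^2 + c^2" using assms(5) unfolding e_def by (simp add: algebra_simps power2_eq_square)
  have "b^2 + c^2 > 0" using assms by (simp add: add_pos_pos)
  hence e0: "e > 0" using ae assms(4) by (metis zero_less_mult_iff not_less_iff_gr_or_eq)
  have "3*b^2*c \<ge> 6 * b^2" using assms by (simp add: mult_left_mono)
  moreover have "c^2 \<le> b^2" using assms by (simp add: power_mono)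
  moreover have "b^2 > 0" using assms by simp
  ultimately have f: "2*b^2 + c^2 - 3*b^2*c < 0" by linarith
  have "(b - a) * (b - e) = 2*b^2 + c^2 - 3*b^2*c"
    using ae unfolding e_def by (simp add: algebra_simps power2_eq_square)
  with f have neg: "(b - a) * (b - e) < 0" by simp
  have "b - e > 0"
  proof (rule ccontr)
    assume "\<not> b - e > 0"
    hence "(b-a) * (b-e) \<ge> 0" using assms(1) by (simp add: mult_nonpos_nonpos)
    with neg show False by simp
  qed
  moreover have "e^2 + b^2 + c^2 = 3*e*b*c" using ae unfolding e_def by (simp add: algebra_simps power2_eq_square)
  ultimately show ?thesis using e0 assms(1) unfolding e_def by simp
qed

lemma markov_no_common_aux:
  fixes d :: int
  assumes "d \<ge> 2"
  shows "\<forall>a b c. nat (a+b+c) = n \<longrightarrow> a > 0 \<longrightarrow> b > 0 \<longrightarrow> c > 0 \<longrightarrow> a^2 + b^2 + c^2 = 3*a*b*c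
        \<longrightarrow> d dvd a \<longrightarrow> d dvd b \<longrightarrow> d dvd c \<longrightarrow> False"
proof (induction n rule: less_induct)
  case (less n)
  have sorted: "False" if "a \<ge> b" "b \<ge> c" "nat (a+b+c) = n" "a > 0" "b > 0" "c > 0"
       "a^2 + b^2 + c^2 = 3*a*b*c" "d dvd a" "d dvd b" "d dvd c" for a b c
  proof -
    have "c \<ge> d" using that assms by (simp add: zdvd_imp_le)
    hence "c \<ge> 2" using assms by simp
    from markov_desc[OF that(1,2) this that(4,7)]
    have h: "0 < 3*b*c - a" "3*b*c - a < a" "(3*b*c-a)^2 + b^2 + c^2 = 3*(3*b*c-a)*b*c" by auto
    have "d dvd 3*b*c - a" using that by simp
    moreover have "nat ((3*b*c - a) + b + c) < n" using h that by simp
    ultimately show False using less.IH h that by blast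
  qed
  show ?case
  proof (intro allI impI)
    fix a b c :: int
    assume H: "nat (a+b+c) = n" "a > 0" "b > 0" "c > 0" "a^2 + b^2 + c^2 = 3*a*b*c"
        "d dvd a" "d dvd b" "d dvd c"
    have s1: "nat (a+b+c) = nat (a+c+b)" "nat (a+b+c) = nat (b+a+c)" "nat (a+b+c) = nat (b+c+a)"
      "nat (a+b+c) = nat (c+a+b)" "nat (a+b+c) = nat (c+b+a)" by (simp_all add: ac_simps)
    have s2: "a^2 + c^2 + b^2 = 3*a*c*b" "b^2 + a^2 + c^2 = 3*b*a*c" "b^2 + c^2 + a^2 = 3*b*c*a"
      "c^2 + a^2 + b^2 = 3*c*a*b" "c^2 + b^2 + a^2 = 3*c*b*a" using H(5) by (simp_all add: ac_simps)
    consider "a \<ge> b \<and> b \<ge> c" | "a \<ge> c \<and> c \<ge> b" | "b \<ge> a \<and> a \<ge> c" | "b \<ge> c \<and> c \<ge> a"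
      | "c \<ge> a \<and> a \<ge> b" | "c \<ge> b \<and> b \<ge> a" by linarith
    then show False
    proof cases
      case 1 then show ?thesis using sorted[where a=a and b=b and c=c] H by metis
    next
      case 2 then show ?thesis using sorted[where a=a and b=c and c=b] H s1 s2 by metis
    next
      case 3 then show ?thesis using sorted[where a=b and b=a and c=c] H s1 s2 by metis
    next
      case 4 then show ?thesis using sorted[where a=b and b=c and c=a] H s1 s2 by metis
    next
      case 5 then show ?thesis using sorted[where a=c and b=a and c=b] H s1 s2 by metis
    next
      case 6 then show ?thesis using sorted[where a=c and b=b and c=a] H s1 s2 by metis
    qed
  qed
qed

lemma markov_coprime:
  fixes a b c :: int
  assumes "a > 0" "b > 0" "c > 0" "a^2 + b^2 + c^2 = 3*a*b*c"
  shows "coprime a b"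
proof -
  define d where "d = gcd a b"
  have d1: "d \<ge> 1" unfolding d_def using assms by (simp add: int_one_le_iff_zero_less)
  have "d^2 dvd a^2" "d^2 dvd b^2" unfolding d_def by simp_all
  moreover have "d^2 dvd 3*a*b*c" unfolding d_def power2_eq_square
    by (simp add: mult_dvd_mono)
  ultimately have "d^2 dvd c^2" using assms(4)
    by (metis dvd_add_right_iff add.assoc)
  hence dc: "d dvd c" by simp
  have "d = 1"
  proof (rule ccontr)
    assume "d \<noteq> 1" hence "d \<ge> 2" using d1 by simp
    from markov_no_common_aux[OF this, rule_format, OF refl] assms dc
    show False unfolding d_def by auto
  qed
  thus ?thesis unfolding d_def by (simp add: coprime_iff_gcd_eq_1)
qed



lemma tri_split:
  fixes A B C D :: "'a::real_vector"
  assumes D: "D = (1-\<mu>) *\<^sub>R A + \<mu> *\<^sub>R C" and mu: "0 < \<mu>" "\<mu> < 1"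
  shows "convex hull {A,B,D} \<union> convex hull {B,D,C} = convex hull {A,B,C}"
proof
  have "D \<in> convex hull {A,B,C}" unfolding convex_hull_3 D
    by (rule CollectI, rule exI[of _ "1-\<mu>"], rule exI[of _ 0], rule exI[of _ \<mu>]) (use mu in auto)
  hence "{A,B,D} \<subseteq> convex hull {A,B,C}" "{B,D,C} \<subseteq> convex hull {A,B,C}"
    by (auto intro: hull_inc)
  thus "convex hull {A,B,D} \<union> convex hull {B,D,C} \<subseteq> convex hull {A,B,C}"
    using convex_hull_subset by (metis Un_least)
next
  show "convex hull {A,B,C} \<subseteq> convex hull {A,B,D} \<union> convex hull {B,D,C}"
  proof
    fix x assume "x \<in> convex hull {A,B,C}"
    then obtain u v w where x: "x = u *\<^sub>R A + v *\<^sub>R B + w *\<^sub>R C" and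
      uvw: "0 \<le> u" "0 \<le> v" "0 \<le> w" "u+v+w = 1" unfolding convex_hull_3 by blast
    show "x \<in> convex hull {A,B,D} \<union> convex hull {B,D,C}"
    proof (cases "w * (1-\<mu>) \<le> u * \<mu>")
      case True
      define u' where "u' = u - w*(1-\<mu>)/\<mu>"
      define d where "d = w / \<mu>"
      have e1: "u' *\<^sub>R A + v *\<^sub>R B + d *\<^sub>R D = (u' + d*(1-\<mu>)) *\<^sub>R A + v *\<^sub>R B + (d*\<mu>) *\<^sub>R C"
        unfolding D by (simp add: algebra_simps)
      have "u' + d*(1-\<mu>) = u" "d*\<mu> = w" unfolding u'_def d_def using mu by (simp_all add: field_simps)
      with e1 have "x = u' *\<^sub>R A + v *\<^sub>R B + d *\<^sub>R D" unfolding x by simp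
      moreover have "0 \<le> u'" unfolding u'_def using True mu by (simp add: field_simps)
      moreover have "0 \<le> d" unfolding d_def using uvw mu by simp
      moreover have "u' + v + d = 1"
      proof -
        have "u' + v + d = u + v + w" unfolding u'_def d_def using mu by (simp add: field_simps)
        thus ?thesis using uvw by simp
      qed
      ultimately have "x \<in> convex hull {A,B,D}" unfolding convex_hull_3 using uvw by blast
      thus ?thesis by simp
    next
      case False
      define w' where "w' = w - u*\<mu>/(1-\<mu>)"
      define d where "d = u / (1-\<mu>)"
      have e1: "v *\<^sub>R B + d *\<^sub>R D + w' *\<^sub>R C = (d*(1-\<mu>)) *\<^sub>R A + v *\<^sub>R B + (d*\<mu> + w') *\<^sub>R C"
        unfolding D by (simp add: algebra_simps)
      have nz: "1 - \<mu> \<noteq> 0" using mu by simp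
      have "d*(1-\<mu>) = u" unfolding d_def using nz by simp
      moreover have "d*\<mu> + w' = w" unfolding w'_def d_def by simp
      ultimately have "x = v *\<^sub>R B + d *\<^sub>R D + w' *\<^sub>R C" using e1 unfolding x by simp
      moreover have "0 \<le> w'" unfolding w'_def using False mu by (simp add: field_simps)
      moreover have "0 \<le> d" unfolding d_def using uvw mu by simp
      moreover have "v + d + w' = 1"
      proof -
        have n1: "\<mu> \<noteq> 1" using mu by simp
        have "u*\<mu>/(1-\<mu>) = u/(1-\<mu>) - u" using nz n1 by (simp add: field_simps)
        hence "v + d + w' = u + v + w" unfolding w'_def d_def by simp
        thus ?thesis using uvw by simp
      qed
      ultimately have "x \<in> convex hull {B,D,C}" unfolding convex_hull_3 using uvw by blast
      thus ?thesis by simp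
    qed
  qed
qed

lemma shear_linear: "linear (\<lambda>v. v + det2 w v *\<^sub>R w)"
  by (rule linearI) (auto simp: det2_def algebra_simps prod_eq_iff)

lemma shear_hull: "shear_map P w ` (convex hull S) = convex hull (shear_map P w ` S)"
proof -
  define L where "L = (\<lambda>v. v + det2 w v *\<^sub>R w)"
  have lin: "linear L" unfolding L_def by (rule shear_linear)
  have eq: "shear_map P w = (\<lambda>x. (P - L P) + x) \<circ> L"
    using linear_diff[OF lin] unfolding shear_map_def L_def by (auto simp: fun_eq_iff algebra_simps)
  show ?thesis unfolding eq image_comp[symmetric]
    by (simp add: convex_hull_linear_image[OF lin] convex_hull_translation)
qed

lemma coprime_primitive:
  assumes cp: "coprime p q" shows "primitive (p, q)"
  unfolding primitive_def
proof
  assume "\<exists>(k::int) u. k > 0 \<and> u \<noteq> (p,q) \<and> (p,q) = (k * fst u, k * snd u)"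
  then obtain k :: int and u where k: "0 < k" and ne: "u \<noteq> (p,q)" and e0: "(p,q) = (k * fst u, k * snd u)"
    by blast
  obtain x y where u: "u = (x,y)" by (cases u)
  have e: "p = k * x" "q = k * y" using e0 u by auto
  have "k dvd p" "k dvd q" using e by auto
  hence "is_unit k" using cp coprime_common_divisor by blast
  hence "k = 1" using k by auto
  thus False using e ne u by auto
qed



lemma nt_facts:
  fixes a b c m1 m2 :: int
  assumes markov: "a > 0" "b > 0" "c > 0" "a^2 + b^2 + c^2 = 3 * a * b * c"
    and m_eq: "a^2 * m1 + b^2 * m2 = c^2"
  shows "coprime (b^2) (-m1) \<and> (\<exists>k. b^2*k = (3*b*c-a)^2 - c^2*m1 \<and> coprime (-(c^2)) (-k))"
proof -
  have cab: "coprime a b" using markov_coprime[OF markov] .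
  have "b^2 + c^2 + a^2 = 3*b*c*a" using markov(4) by (simp add: ac_simps)
  hence cbc: "coprime b c" using markov_coprime[of b c a] markov by simp
  have c1: "coprime (b^2) m1"
  proof (rule coprimeI)
    fix d assume d: "d dvd b^2" "d dvd m1"
    hence "d dvd c^2" using m_eq by (metis dvd_add dvd_mult dvd_mult2)
    moreover have "coprime (b^2) (c^2)" using cbc by simp
    ultimately show "is_unit d" using d coprime_common_divisor by (metis coprime_dvd_mult_left_iff dvd_mult2 coprime_commute) 
  qed
  define X where "X = (3*b*c-a)^2 - c^2*m1"
  have aa: "a * (3*b*c - a) = b^2 + c^2" using markov(4) by (simp add: algebra_simps power2_eq_square)
  have idt: "a^2 * X = b^2 * (b^2 + 2*c^2 + c^2*m2)"
  proof -
    have "a^2 * X = (a*(3*b*c-a))^2 - c^2 * (a^2*m1)" unfolding X_def by (simp add: algebra_simps power2_eq_square)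
    also have "\<dots> = (b^2+c^2)^2 - c^2*(c^2 - b^2*m2)" proof -
      have m': "a^2*m1 = c^2 - b^2*m2" using m_eq by simp
      show ?thesis by (simp only: aa m')
    qed
    also have "\<dots> = b^2 * (b^2 + 2*c^2 + c^2*m2)" by (simp add: algebra_simps power2_eq_square)
    finally show ?thesis .
  qed
  have "coprime (b^2) (a^2)" using cab by (simp add: coprime_commute)
  moreover have "b^2 dvd a^2 * X" using idt by simp
  ultimately have "b^2 dvd X" using coprime_dvd_mult_right_iff by blast
  then obtain k where k: "X = b^2 * k" by blast
  have ak: "a^2 * k = b^2 + 2*c^2 + c^2*m2"
  proof -
    have "b^2 * (a^2 * k) = b^2 * (b^2 + 2*c^2 + c^2*m2)" using idt k by (simp add: algebra_simps)
    thus ?thesis using markov(2) by simp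
  qed
  have c2: "coprime (c^2) k"
  proof (rule coprimeI)
    fix d assume d: "d dvd c^2" "d dvd k"
    have "b^2 = a^2*k - c^2*(2 + m2)" using ak by (simp add: algebra_simps)
    hence "d dvd b^2" using d by (metis dvd_diff dvd_mult dvd_mult2)
    moreover have "coprime (c^2) (b^2)" using cbc by (simp add: coprime_commute)
    ultimately show "is_unit d" using d coprime_common_divisor by blast
  qed
  show ?thesis using c1 c2 k unfolding X_def by (auto simp: mult.commute)
qed



theorem proposition2p4:
  fixes a b c m1 m2 :: int
    and l2 :: real
    and u1 u2 u3 w1 V0 V1 V2 Q :: "real \<times> real"
    and M :: "real \<times> real \<Rightarrow> real \<times> real"
    and \<Delta>' :: "(real \<times> real) set"
  assumes markov: "a > 0" "b > 0" "c > 0" "a^2 + b^2 + c^2 = 3 * a * b * c"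
    and m_pos: "m1 > 0" "m2 > 0"
    and m_eq: "a^2 * m1 + b^2 * m2 = c^2"
    and l2_def: "l2 = real_of_int (m2 + 1) / real_of_int a"
    and u1_def: "u1 = (real_of_int (b^2), - real_of_int m1)"
    and u2_def: "u2 = - (real_of_int (a^2), real_of_int m2)"
    and u3_def: "u3 = (0, 1)"
    and w1_def: "w1 = - (real_of_int a, l2)"
    and V1_def: "V1 = V0 + real_of_int (a^2) *\<^sub>R u1"
    and V2_def: "V2 = V1 + real_of_int (b^2) *\<^sub>R u2"
    and Q_on_line: "\<exists>t::real. Q = V2 + t *\<^sub>R w1"
    and Q_on_edge: "Q \<in> closed_segment V0 V1"
    and M_def: "M = shear_map V2 w1"
    and Delta'_def: "\<Delta>' = convex hull {V0, Q, V2} \<union> M ` (convex hull {Q, V1, V2})"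
  shows "\<exists>(lam::real) P1 P2 P3. lam > 0 \<and> \<not> collinear {P1, P2, P3} \<and>
           \<Delta>' = convex hull {P1, P2, P3} \<and>
           has_affine_length (P2 - P1) (lam * real_of_int (c^2)) \<and>
           has_affine_length (P3 - P2) (lam * real_of_int (b^2)) \<and>
           has_affine_length (P1 - P3) (lam * real_of_int ((3 * b * c - a)^2))"
proof -
  obtain x0 y0 where V0: "V0 = (x0, y0)" by (cases V0)
  define ra rb rc rm1 rm2 where "ra = real_of_int a" "rb = real_of_int b" "rc = real_of_int c"
    "rm1 = real_of_int m1" "rm2 = real_of_int m2"
  define ap where "ap = 3*b*c - a"
  define rap where "rap = real_of_int ap"
  have aai: "a * ap = b^2 + c^2" unfolding ap_def using markov(4) by (simp add: algebra_simps power2_eq_square)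
  have ap0: "ap > 0"
  proof -
    have "0 < a * ap" unfolding aai using markov by (simp add: add_pos_pos)
    thus ?thesis using markov(1) zero_less_mult_pos by blast
  qed
  have raa: "ra * rap = rb^2 + rc^2" unfolding ra_rb_rc_rm1_rm2_def(1-3) rap_def
    using arg_cong[OF aai, of real_of_int] by simp
  have ra0: "ra > 0" and rap0: "rap > 0" and rb0: "rb > 0" and rc0: "rc > 0"
    using markov ap0 unfolding ra_rb_rc_rm1_rm2_def rap_def by auto
  have rmeq: "ra^2 * rm1 + rb^2 * rm2 = rc^2" unfolding ra_rb_rc_rm1_rm2_def
    using arg_cong[OF m_eq, of real_of_int] by simp
  have l2a: "l2 * ra = rm2 + 1" unfolding l2_def ra_rb_rc_rm1_rm2_def using markov by simp
  have V1: "V1 = (x0 + ra^2*rb^2, y0 - ra^2*rm1)"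
    unfolding V1_def V0 u1_def ra_rb_rc_rm1_rm2_def by simp
  have V2: "V2 = (x0, y0 - rc^2)"
    using rmeq unfolding V2_def V1 u2_def ra_rb_rc_rm1_rm2_def by (simp add: algebra_simps)
  have w1: "w1 = (-ra, -l2)" unfolding w1_def ra_rb_rc_rm1_rm2_def by simp
  obtain t where t: "Q = V2 + t *\<^sub>R w1" using Q_on_line by blast
  obtain s where s: "Q = (1 - s) *\<^sub>R V0 + s *\<^sub>R V1" using Q_on_edge unfolding closed_segment_def by blast
  have Qs: "Q = (x0 + s*ra^2*rb^2, y0 - s*ra^2*rm1)" unfolding s V0 V1 by (simp add: algebra_simps)
  have Qt: "Q = (x0 - t*ra, y0 - rc^2 - t*l2)" unfolding t V2 w1 by simp
  have e1: "s*ra^2*rb^2 = - t*ra" and e2: "s*ra^2*rm1 = rc^2 + t*l2" using Qs Qt by auto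
  have tt: "t = - s*ra*rb^2"
  proof -
    have "ra * (t + s*ra*rb^2) = 0" using e1 by (simp add: algebra_simps power2_eq_square)
    hence "t + s*ra*rb^2 = 0" using ra0 by simp
    thus ?thesis by simp
  qed
  have "rc^2 = s * (ra^2*rm1 + rb^2*rm2 + rb^2)"
  proof -
    have "t*l2 = - s * rb^2 * (l2*ra)" unfolding tt by (simp add: algebra_simps)
    also have "\<dots> = - s * rb^2 * (rm2 + 1)" using l2a by simp
    finally show ?thesis using e2 by (simp add: algebra_simps)
  qed
  moreover have "s * (ra^2*rm1 + rb^2*rm2 + rb^2) = s * (rb^2 + rc^2)"
    using rmeq by simp
  ultimately have "rc^2 = s * (rb^2 + rc^2)" by simp
  moreover have "rb^2 + rc^2 \<noteq> 0" using rb0 rc0 by (simp add: add_pos_pos)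
  ultimately have ss: "s = rc^2 / (rb^2 + rc^2)" by (simp add: eq_divide_eq)
  define lam where "lam = ra / rap"
  have lam0: "lam > 0" unfolding lam_def using ra0 rap0 by simp
  have sra: "s * ra^2 = lam * rc^2"
    unfolding ss lam_def raa[symmetric] using ra0 rap0 by (simp add: field_simps power2_eq_square)
  have Q: "Q = (x0 + lam*rc^2*rb^2, y0 - lam*rc^2*rm1)" using Qs sra by (simp add: algebra_simps)
  define R where "R = (x0, y0 - (rb^2 + rc^2))"
  have MQ: "M Q = Q" unfolding M_def shear_map_def t by (simp add: det2_def algebra_simps)
  have MV2: "M V2 = V2" unfolding M_def shear_map_def by (simp add: det2_def)
  have MV1: "M V1 = R"
  proof -
    have cm: "rc^2 - ra^2*rm1 = rb^2*rm2" using rmeq by linarith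
    have vd: "V1 - V2 = (ra^2*rb^2, rb^2*rm2)" unfolding V1 V2 using cm by simp
    have lr: "rb^2*ra*l2 = rb^2*rm2 + rb^2"
    proof -
      have "rb^2*ra*l2 = rb^2*(l2*ra)" by (simp add: ac_simps)
      also have "\<dots> = rb^2*rm2 + rb^2" unfolding l2a by (simp add: algebra_simps)
      finally show ?thesis .
    qed
    have d: "det2 w1 (V1 - V2) = rb^2 * ra"
    proof -
      have "det2 w1 (V1 - V2) = ra * (rb^2*ra*l2) - ra * rb^2 * rm2" unfolding w1 vd det2_def
        by (simp add: algebra_simps power2_eq_square)
      also have "\<dots> = rb^2 * ra" unfolding lr by (simp add: algebra_simps)
      finally show ?thesis .
    qed
    have "M V1 = V1 + (rb^2*ra) *\<^sub>R w1" unfolding M_def shear_map_def d by simp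
    also have "\<dots> = (x0 + ra^2*rb^2 - rb^2*ra*ra, y0 - ra^2*rm1 - rb^2*ra*l2)"
      unfolding V1 w1 by simp
    also have "\<dots> = R" unfolding R_def lr using rmeq by (simp add: power2_eq_square)
    finally show ?thesis .
  qed
  have img: "M ` (convex hull {Q, V1, V2}) = convex hull {Q, V2, R}"
    unfolding M_def shear_hull using MQ MV1 MV2 unfolding M_def by (simp add: insert_commute)
  define mu where "mu = rc^2 / (rb^2 + rc^2)"
  have p2: "rb^2 > 0" "rc^2 > 0" using rb0 rc0 by simp_all
  have p3: "rb^2 + rc^2 > 0" using p2 by linarith
  have mu1: "0 < mu" unfolding mu_def by (rule divide_pos_pos[OF p2(2) p3])
  have mu2: "mu < 1" unfolding mu_def divide_less_eq_1_pos[OF p3] using p2 by linarith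
  note mu = mu1 mu2
  have V2mu: "V2 = (1 - mu) *\<^sub>R V0 + mu *\<^sub>R R"
  proof -
    have "mu * (rb^2 + rc^2) = rc^2" unfolding mu_def using p3 by simp
    thus ?thesis unfolding V2 V0 R_def by (simp add: algebra_simps)
  qed
  have Dl: "\<Delta>' = convex hull {V0, Q, R}"
    unfolding Delta'_def img using tri_split[OF V2mu mu, of Q] by simp
  obtain k where k: "b^2*k = ap^2 - c^2*m1" and ck: "coprime (-(c^2)) (-k)" and cb: "coprime (b^2) (-m1)"
    using nt_facts[OF markov m_eq] unfolding ap_def by blast
  have rk: "rb^2 * real_of_int k = rap^2 - rc^2 * rm1"
    unfolding ra_rb_rc_rm1_rm2_def rap_def using arg_cong[OF k, of real_of_int] by simp
  show ?thesis
  proof (intro exI conjI)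
    show "lam > 0" by (rule lam0)
    show "\<Delta>' = convex hull {V0, Q, R}" by (rule Dl)
    show "\<not> collinear {V0, Q, R}"
    proof
      assume "collinear {V0, Q, R}"
      hence "collinear {Q, V0, R}" by (simp add: insert_commute)
      hence "collinear {0, Q - V0, R - V0}" by (subst (asm) collinear_3) auto
      hence "Q - V0 = 0 \<or> R - V0 = 0 \<or> (\<exists>z. R - V0 = z *\<^sub>R (Q - V0))" by (simp add: collinear_lemma)
      moreover have "Q - V0 \<noteq> 0" using lam0 rb0 rc0 unfolding Q V0 by (simp add: prod_eq_iff)
      moreover have "R - V0 \<noteq> 0" using p3 unfolding R_def V0 by (simp add: prod_eq_iff)
      moreover have "R - V0 \<noteq> z *\<^sub>R (Q - V0)" for z
      proof
        assume "R - V0 = z *\<^sub>R (Q - V0)"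
        hence "0 = z * (lam*rc^2*rb^2)" "-(rb^2+rc^2) = z * (- lam*rc^2*rm1)"
          unfolding R_def Q V0 by (auto simp: prod_eq_iff)
        thus False using lam0 rb0 rc0 p3 by simp
      qed
      ultimately show False by blast
    qed
    show "has_affine_length (Q - V0) (lam * real_of_int (c^2))"
      unfolding has_affine_length_def
    proof (intro conjI exI)
      show "0 \<le> lam * real_of_int (c^2)" using lam0 by simp
      show "primitive (b^2, -m1)" using coprime_primitive[OF cb] .
      show "Q - V0 = (lam * real_of_int (c^2) * real_of_int (fst (b^2, -m1)),
                      lam * real_of_int (c^2) * real_of_int (snd (b^2, -m1)))"
        unfolding Q V0 ra_rb_rc_rm1_rm2_def by simp
    qed
    show "has_affine_length (R - Q) (lam * real_of_int (b^2))"
      unfolding has_affine_length_def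
    proof (intro conjI exI)
      show "0 \<le> lam * real_of_int (b^2)" using lam0 by simp
      show "primitive (-(c^2), -k)" using coprime_primitive[OF ck] .
      have "lam * rb^2 * real_of_int k = lam * (rap^2 - rc^2*rm1)" using rk by (simp add: mult.assoc)
      also have "\<dots> = ra*rap - lam*rc^2*rm1" unfolding lam_def using rap0
        by (simp add: field_simps power2_eq_square)
      also have "\<dots> = (rb^2+rc^2) - lam*rc^2*rm1" using raa by simp
      finally have kk: "lam * rb^2 * real_of_int k = (rb^2+rc^2) - lam*rc^2*rm1" .
      have "R - Q = (lam*rb^2*(-(rc^2)), lam*rb^2*(-real_of_int k))"
        unfolding Q R_def using kk by (simp add: algebra_simps)
      thus "R - Q = (lam * real_of_int (b^2) * real_of_int (fst (-(c^2), -k)),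
                      lam * real_of_int (b^2) * real_of_int (snd (-(c^2), -k)))"
        unfolding ra_rb_rc_rm1_rm2_def by simp
    qed
    show "has_affine_length (V0 - R) (lam * real_of_int ((3 * b * c - a)^2))"
      unfolding has_affine_length_def
    proof (intro conjI exI)
      show "0 \<le> lam * real_of_int ((3 * b * c - a)^2)" using lam0 by simp
      show "primitive (0, 1)" by (rule coprime_primitive) simp
      have "lam * rap^2 = rb^2 + rc^2" unfolding lam_def raa[symmetric] using rap0
        by (simp add: power2_eq_square)
      thus "V0 - R = (lam * real_of_int ((3 * b * c - a)^2) * real_of_int (fst (0::int, 1::int)),
                      lam * real_of_int ((3 * b * c - a)^2) * real_of_int (snd (0::int, 1::int)))"
        unfolding V0 R_def rap_def ap_def by simp
    qed
  qed
qed


end
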